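(* For every integer $j\geq 2$ and every integer $m\geq 0$ with $(j,m)\notin\{(2,0),(3,0)\}$, \[ \lim_{t\to -1}(1-t^2)^{\frac{j-3}{2}+m}g_j^{(m)}(t)=0,\qquad \lim_{t\to +1}(1-t^2)^{\frac{j-3}{2}+m}g_j^{(m)}(t)=-(j-1)\,2^{m-2}\,\frac{\Gamma\big(\frac{j-3}{2}+m\big)}{\pi^{\frac{j-1}{2}}}. \]
   Context: $\omega_j$ is the surface area of $\mathbb{S}^{j-1}\subseteq\mathbb{R}^j$. The Berg functions $g_j\in C^\infty(-1,1)$, $j\ge2$, are defined by $g_2(t)=\frac{1}{2\pi}(\pi-\arccos t)(1-t^2)^{1/2}-\frac{1}{4\pi}t$, $g_3(t)=\frac{1}{2\pi}\big(1+t\log(1-t)+(\tfrac43-\log 2)t\big)$, $g_{j+2}(t)=\frac{j+1}{2\pi}g_j(t)+\frac{j+1}{2\pi(j-1)}t\,g_j'(t)+\frac{j+1}{2\pi\omega_j}t$. $g_j^{(m)}$ denotes the $m$-th derivative. *)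

theory Defs
  imports "HOL-Analysis.Analysis"
begin

(* omega j = surface area of the unit sphere S^(j-1) in R^j *)
definition omega :: "nat \<Rightarrow> real" where
  "omega j = 2 * pi powr (real j / 2) / Gamma (real j / 2)"

(* Berg functions g_j, j >= 2 (indices 0,1 are unused dummies).
   g_{j+2} = (j+1)/(2pi) g_j + (j+1)/(2pi(j-1)) t g_j' + (j+1)/(2 pi omega_j) t *)
fun berg :: "nat \<Rightarrow> real \<Rightarrow> real" where
  "berg 0 = (\<lambda>t. 0)"
| "berg (Suc 0) = (\<lambda>t. 0)"
| "berg (Suc (Suc 0)) =
     (\<lambda>t. 1 / (2 * pi) * (pi - arccos t) * sqrt (1 - t\<^sup>2) - t / (4 * pi))"
| "berg (Suc (Suc (Suc 0))) =
     (\<lambda>t. 1 / (2 * pi) * (1 + t * ln (1 - t) + (4 / 3 - ln 2) * t))"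
| "berg (Suc (Suc (Suc (Suc j)))) =
     (\<lambda>t. (real (j + 2) + 1) / (2 * pi) * berg (j + 2) t
        + (real (j + 2) + 1) / (2 * pi * (real (j + 2) - 1)) * t * deriv (berg (j + 2)) t
        + (real (j + 2) + 1) / (2 * pi * omega (j + 2)) * t)"

end

theory Submission
  imports Defs "HOL-Real_Asymp.Real_Asymp"
begin


definition smoothI :: "(real \<Rightarrow> real) \<Rightarrow> bool" where
  "smoothI f \<longleftrightarrow> (\<forall>m. \<forall>t\<in>{-1<..<1}. ((deriv ^^ m) f has_real_derivative (deriv ^^ Suc m) f t) (at t))"

lemma derivs_eq:
  assumes D: "\<And>m t. t \<in> S \<Longrightarrow> (F m has_real_derivative F (Suc m) t) (at t)"
    and S: "open S" and f: "\<And>t. t \<in> S \<Longrightarrow> f t = F 0 t"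
  shows "t \<in> S \<Longrightarrow> (deriv ^^ m) f t = F m t"
proof (induction m arbitrary: t)
  case 0 then show ?case using f by simp
next
  case (Suc m)
  have "((deriv ^^ m) f has_real_derivative F (Suc m) t) (at t)"
    by (rule has_field_derivative_transform_within_open[OF D[OF Suc.prems] S Suc.prems])
       (simp add: Suc.IH)
  then show ?case by (simp add: DERIV_imp_deriv)
qed

lemma derivs_smooth:
  assumes D: "\<And>m t. t \<in> {-1<..<1} \<Longrightarrow> (F m has_real_derivative F (Suc m) t) (at t)"
    and f: "\<And>t. t \<in> {-1<..<1} \<Longrightarrow> f t = F 0 t"
  shows "smoothI f" "\<And>m t. t \<in> {-1<..<1} \<Longrightarrow> (deriv ^^ m) f t = F m t"
proof -
  have E: "(deriv ^^ m) f t = F m t" if "t \<in> {-1<..<1}" for m t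
    using derivs_eq[where S="{-1<..<1}" and t=t and m=m, OF D _ f] that by auto
  show "\<And>m t. t \<in> {-1<..<1} \<Longrightarrow> (deriv ^^ m) f t = F m t" by (rule E)
  show "smoothI f" unfolding smoothI_def
  proof (intro allI ballI)
    fix m t assume t: "t \<in> {-1<..<1::real}"
    show "((deriv ^^ m) f has_real_derivative (deriv ^^ Suc m) f t) (at t)"
    proof -
      have "((deriv ^^ m) f has_real_derivative F (Suc m) t) (at t)"
      proof (rule has_field_derivative_transform_within_open[OF D[OF t] _ t])
        show "open {-1<..<1::real}" by simp
        show "F m x = (deriv ^^ m) f x" if "x \<in> {-1<..<1}" for x using E[OF that] by simp
      qed
      then show ?thesis using E[OF t, of "Suc m"] by simp
    qed
  qed
qed

definition lin :: "nat \<Rightarrow> real \<Rightarrow> real" where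
  "lin m t = (if m = 0 then t else if m = 1 then 1 else 0)"

lemma lin_deriv: "(lin m has_real_derivative lin (Suc m) t) (at t)"
  by (cases m) (auto simp: lin_def[abs_def] intro!: derivative_eq_intros)

lemma smooth_comb:
  assumes "smoothI f"
  shows "smoothI (\<lambda>t. a * f t + b * t * deriv f t + c * t)"
    "\<And>m t. t \<in> {-1<..<1} \<Longrightarrow> (deriv ^^ m) (\<lambda>t. a * f t + b * t * deriv f t + c * t) t
        = (a + b * real m) * (deriv ^^ m) f t + b * t * (deriv ^^ Suc m) f t + c * lin m t"
proof -
  define F where "F m t = (a + b * real m) * (deriv ^^ m) f t + b * t * (deriv ^^ Suc m) f t + c * lin m t" for m t
  have D: "(F m has_real_derivative F (Suc m) t) (at t)" if t: "t \<in> {-1<..<1}" for m t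
  proof -
    have d1: "((deriv ^^ m) f has_real_derivative (deriv ^^ Suc m) f t) (at t)"
      and d2: "((deriv ^^ Suc m) f has_real_derivative (deriv ^^ Suc (Suc m)) f t) (at t)"
      using assms t unfolding smoothI_def by blast+
    show ?thesis unfolding F_def[abs_def]
      by (rule derivative_eq_intros d1 d2 lin_deriv refl)+ (simp add: algebra_simps)
  qed
  have f: "(a * f t + b * t * deriv f t + c * t) = F 0 t" for t
    by (simp add: F_def lin_def)
  show "smoothI (\<lambda>t. a * f t + b * t * deriv f t + c * t)"
    "\<And>m t. t \<in> {-1<..<1} \<Longrightarrow> (deriv ^^ m) (\<lambda>t. a * f t + b * t * deriv f t + c * t) t
        = (a + b * real m) * (deriv ^^ m) f t + b * t * (deriv ^^ Suc m) f t + c * lin m t"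
    using derivs_smooth[of F, OF D f] by (auto simp: F_def)
qed



definition yb :: "real \<Rightarrow> real" where "yb t = (pi - arccos t) * sqrt (1 - t^2)"
definition Rp :: "nat \<Rightarrow> real \<Rightarrow> real" where
  "Rp m t = (if m = 0 then 1 - t^2 else if m = 1 then -2*t else if m = 2 then -2 else 0)"

lemma Rp_deriv: "(Rp m has_real_derivative Rp (Suc m) t) (at t)"
proof -
  consider "m = 0" | "m = 1" | "m = 2" | "m > 2" by linarith
  then show ?thesis
    by cases (auto simp: Rp_def[abs_def] intro!: derivative_eq_intros)
qed

lemma yb_deriv0:
  assumes t: "t \<in> {-1<..<1}"
  shows "(yb has_real_derivative (1 - t * (pi - arccos t) / sqrt (1 - t^2))) (at t)"
proof -
  have p: "1 - t^2 > 0" using t by (auto simp: abs_square_less_1 abs_less_iff)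
  have s: "sqrt (1 - t^2) * sqrt (1 - t^2) = 1 - t^2" using p by simp
  have "(yb has_real_derivative (- inverse (- sqrt (1 - t^2))) * sqrt (1 - t^2)
          + (pi - arccos t) * (inverse (sqrt (1 - t^2)) / 2 * (- (2 * t)))) (at t)"
    unfolding yb_def[abs_def] using t p
    by (auto intro!: derivative_eq_intros)
  moreover have "(- inverse (- sqrt (1 - t^2))) * sqrt (1 - t^2)
          + (pi - arccos t) * (inverse (sqrt (1 - t^2)) / 2 * (- (2 * t)))
        = 1 - t * (pi - arccos t) / sqrt (1 - t^2)"
    using p by (simp add: field_simps)
  ultimately show ?thesis by simp
qed

lemma aux_q: "(q::real) \<noteq> 0 \<Longrightarrow> q * ((a*q + b)/q^2) = a + b/q"
  by (simp add: field_simps power2_eq_square)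

definition Qy :: "nat \<Rightarrow> bool" where
 "Qy m \<longleftrightarrow> (\<forall>t\<in>{-1<..<1}. ((deriv^^m) yb has_real_derivative (deriv^^Suc m) yb t) (at t) \<and>
      (1 - t^2) * (deriv^^Suc m) yb t = (2*real m - 1) * t * (deriv^^m) yb t
         + (real m^2 - 2*real m) * (deriv^^(m-1)) yb t + Rp m t)"

lemma sq_pos: "t \<in> {-1<..<1} \<Longrightarrow> 1 - t^2 > (0::real)"
  by (auto simp: abs_square_less_1 abs_less_iff)

lemma Qy_all: "Qy m \<and> (\<forall>t\<in>{-1<..<1}. ((deriv^^(m-1)) yb has_real_derivative (deriv^^Suc (m-1)) yb t) (at t))"
proof (induction m)
  case 0
  have Q0: "Qy 0" unfolding Qy_def
  proof
    fix t :: real assume t: "t \<in> {-1<..<1}"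
    have p: "1 - t^2 > 0" using sq_pos[OF t] .
    have s: "sqrt (1 - t^2) * sqrt (1 - t^2) = 1 - t^2" using p by simp
    have d: "deriv yb t = 1 - t*(pi - arccos t)/sqrt(1-t^2)" using yb_deriv0[OF t] DERIV_imp_deriv by blast
    have "(1 - t^2) * (1 - t*(pi - arccos t)/sqrt(1-t^2)) = - t * yb t + Rp 0 t"
      using p s unfolding yb_def Rp_def by (simp add: field_simps)
    then show "((deriv^^0) yb has_real_derivative (deriv^^Suc 0) yb t) (at t) \<and>
      (1 - t^2) * (deriv^^Suc 0) yb t = (2*real 0 - 1) * t * (deriv^^0) yb t
         + (real 0^2 - 2*real 0) * (deriv^^(0-1)) yb t + Rp 0 t"
      using yb_deriv0[OF t] d by simp
  qed
  then show ?case unfolding Qy_def by simp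
next
  case (Suc m)
  let ?I = "{-1<..<1::real}"
  let ?D = "\<lambda>k. (deriv^^k) yb"
  have Qm: "Qy m" and Dm1: "\<And>t. t \<in> ?I \<Longrightarrow> (?D (m-1) has_real_derivative ?D (Suc (m-1)) t) (at t)"
    using Suc.IH by auto
  have Dm: "\<And>t. t \<in> ?I \<Longrightarrow> (?D m has_real_derivative ?D (Suc m) t) (at t)"
   and Em: "\<And>t. t \<in> ?I \<Longrightarrow> (1 - t^2) * ?D (Suc m) t = (2*real m - 1) * t * ?D m t
         + (real m^2 - 2*real m) * ?D (m-1) t + Rp m t"
    using Qm unfolding Qy_def by auto
  define N where "N t = (2*real m - 1) * t * ?D m t + (real m^2 - 2*real m) * ?D (m-1) t + Rp m t" for t
  define N' where "N' t = (2*real m - 1) * ?D m t + (2*real m - 1) * t * ?D (Suc m) t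
     + (real m^2 - 2*real m) * ?D (Suc (m-1)) t + Rp (Suc m) t" for t
  have eqD: "?D (Suc m) t = N t / (1 - t^2)" if "t \<in> ?I" for t
    using Em[OF that] sq_pos[OF that] unfolding N_def by (simp add: field_simps)
  have dN: "(N has_real_derivative N' t) (at t)" if t: "t \<in> ?I" for t
    unfolding N_def[abs_def] N'_def
    by (rule derivative_eq_intros Dm[OF t] Dm1[OF t] Rp_deriv refl)+ (simp add: algebra_simps)
  have dD: "(?D (Suc m) has_real_derivative (N' t * (1-t^2) + 2*t*N t)/(1-t^2)^2) (at t)"
    if t: "t \<in> ?I" for t
  proof -
    have "((\<lambda>t. N t / (1 - t^2)) has_real_derivative (N' t * (1-t^2) + 2*t*N t)/(1-t^2)^2) (at t)"
      using sq_pos[OF t]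
      by (auto intro!: derivative_eq_intros dN[OF t] simp: power2_eq_square field_simps)
    then show ?thesis
      by (rule has_field_derivative_transform_within_open[OF _ _ t]) (use eqD in auto)
  qed
  have "Qy (Suc m)" unfolding Qy_def
  proof
    fix t assume t: "t \<in> ?I"
    have p: "1 - t^2 > 0" using sq_pos[OF t] .
    have dd: "?D (Suc (Suc m)) t = (N' t * (1-t^2) + 2*t*N t)/(1-t^2)^2"
      using dD[OF t] by (simp add: DERIV_imp_deriv)
    have c: "(real m^2 - 2*real m) * ?D (Suc (m-1)) t = (real m^2 - 2*real m) * ?D m t"
      by (cases m) auto
    have "(1 - t^2) * ?D (Suc (Suc m)) t = N' t + 2 * t * ?D (Suc m) t"
      unfolding dd eqD[OF t] using aux_q[of "1-t^2" "N' t" "2*t*N t"] p by simp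
    also have "\<dots> = (2*real (Suc m) - 1) * t * ?D (Suc m) t
         + (real (Suc m)^2 - 2*real (Suc m)) * ?D (Suc m - 1) t + Rp (Suc m) t"
      unfolding N'_def using c by (simp add: algebra_simps power2_eq_square)
    finally show "(?D (Suc m) has_real_derivative ?D (Suc (Suc m)) t) (at t) \<and>
      (1 - t^2) * ?D (Suc (Suc m)) t = (2*real (Suc m) - 1) * t * ?D (Suc m) t
         + (real (Suc m)^2 - 2*real (Suc m)) * ?D (Suc m - 1) t + Rp (Suc m) t"
      using dD[OF t] dd by simp
  qed
  then show ?case using Dm by simp
qed



definition Yb :: "nat \<Rightarrow> real \<Rightarrow> real" where
  "Yb m t = (1 - t^2) powr (real m - 1/2) * (deriv^^m) yb t"

fun Lrec :: "real \<Rightarrow> real \<Rightarrow> real \<Rightarrow> nat \<Rightarrow> real" where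
  "Lrec s a b 0 = a"
| "Lrec s a b (Suc 0) = b"
| "Lrec s a b (Suc (Suc m)) = (2 * real m + 1) * s * Lrec s a b (Suc m)"

lemma Yb_rec:
  assumes t: "t \<in> {-1<..<1}"
  shows "Yb (Suc (Suc m)) t = (2 * real m + 1) * t * Yb (Suc m) t
     + (real (Suc m)^2 - 2 * real (Suc m)) * (1 - t^2) * Yb m t
     + (1 - t^2) powr (real m + 1/2) * Rp (Suc m) t"
proof -
  define q where "q = 1 - t^2"
  have q: "q > 0" using sq_pos[OF t] by (simp add: q_def)
  have E: "q * (deriv^^Suc (Suc m)) yb t = (2*real (Suc m) - 1) * t * (deriv^^Suc m) yb t
         + (real (Suc m)^2 - 2*real (Suc m)) * (deriv^^m) yb t + Rp (Suc m) t"
    using Qy_all[of "Suc m"] t unfolding Qy_def q_def by auto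
  have e1: "q powr (real (Suc (Suc m)) - 1/2) = q powr (real m + 1/2) * q"
  proof -
    have "q powr (real (Suc (Suc m)) - 1/2) = q powr ((real m + 1/2) + 1)"
      by (rule arg_cong[where f="\<lambda>x. q powr x"]) simp
    also have "\<dots> = q powr (real m + 1/2) * q" using q by (simp only: powr_add powr_one less_imp_le)
    finally show ?thesis .
  qed
  have e2: "q powr (real (Suc m) - 1/2) = q powr (real m + 1/2)"
    by (simp add: algebra_simps)
  have e3: "q powr (real m + 1/2) = q * q powr (real m - 1/2)"
  proof -
    have "q powr (real m + 1/2) = q powr (1 + (real m - 1/2))"
      by (rule arg_cong[where f="\<lambda>x. q powr x"]) simp
    also have "\<dots> = q * q powr (real m - 1/2)" using q by (simp only: powr_add powr_one less_imp_le)
    finally show ?thesis .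
  qed
  have "Yb (Suc (Suc m)) t = q powr (real m + 1/2) * (q * (deriv^^Suc (Suc m)) yb t)"
    unfolding Yb_def q_def[symmetric] e1 by simp
  also have "\<dots> = (2 * real m + 1) * t * Yb (Suc m) t
     + (real (Suc m)^2 - 2 * real (Suc m)) * q * Yb m t
     + q powr (real m + 1/2) * Rp (Suc m) t"
    unfolding E Yb_def q_def[symmetric] e2 e3 by (simp add: algebra_simps)
  finally show ?thesis by (simp add: q_def)
qed

lemma filt_facts:
  assumes s: "((\<lambda>t. t) \<longlongrightarrow> s) F" "s^2 = 1" and ev: "eventually (\<lambda>t. t \<in> {-1<..<1::real}) F"
  shows "((\<lambda>t. 1 - t^2) \<longlongrightarrow> 0) F" "eventually (\<lambda>t. 1 - t^2 \<ge> 0) F"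
    "\<And>a. a > 0 \<Longrightarrow> ((\<lambda>t. (1 - t^2) powr a) \<longlongrightarrow> 0) F"
proof -
  have "((\<lambda>t. 1 - t^2) \<longlongrightarrow> 1 - s^2) F" by (intro tendsto_intros s)
  then show l: "((\<lambda>t. 1 - t^2) \<longlongrightarrow> 0) F" using s by simp
  show e: "eventually (\<lambda>t. 1 - t^2 \<ge> 0) F"
    using ev by eventually_elim (use sq_pos in force)
  show "\<And>a. a > 0 \<Longrightarrow> ((\<lambda>t. (1 - t^2) powr a) \<longlongrightarrow> 0) F"
    by (rule tendsto_zero_powrI[OF l tendsto_const e])
qed

lemma Yb_lim:
  assumes s: "((\<lambda>t. t) \<longlongrightarrow> s) F" "s^2 = 1" and ev: "eventually (\<lambda>t. t \<in> {-1<..<1::real}) F"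
    and l0: "(Yb 0 \<longlongrightarrow> a) F" and l1: "(Yb 1 \<longlongrightarrow> b) F"
  shows "(Yb m \<longlongrightarrow> Lrec s a b m) F"
proof -
  note ff = filt_facts[OF s ev]
  have "(Yb m \<longlongrightarrow> Lrec s a b m) F \<and> (Yb (Suc m) \<longlongrightarrow> Lrec s a b (Suc m)) F"
  proof (induction m)
    case 0 then show ?case using l0 l1 by simp
  next
    case (Suc m)
    have "((\<lambda>t. (2 * real m + 1) * t * Yb (Suc m) t
     + (real (Suc m)^2 - 2 * real (Suc m)) * (1 - t^2) * Yb m t
     + (1 - t^2) powr (real m + 1/2) * Rp (Suc m) t) \<longlongrightarrow>
       (2 * real m + 1) * s * Lrec s a b (Suc m)
     + (real (Suc m)^2 - 2 * real (Suc m)) * 0 * Lrec s a b m + 0 * Rp (Suc m) s) F"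
      unfolding Rp_def
      by (intro tendsto_intros s ff Suc.IH[THEN conjunct1] Suc.IH[THEN conjunct2]) (auto intro!: tendsto_intros s)
    moreover have "(2 * real m + 1) * s * Lrec s a b (Suc m)
     + (real (Suc m)^2 - 2 * real (Suc m)) * 0 * Lrec s a b m + 0 * Rp (Suc m) s = Lrec s a b (Suc (Suc m))"
      by simp
    ultimately have "((\<lambda>t. (2 * real m + 1) * t * Yb (Suc m) t
     + (real (Suc m)^2 - 2 * real (Suc m)) * (1 - t^2) * Yb m t
     + (1 - t^2) powr (real m + 1/2) * Rp (Suc m) t) \<longlongrightarrow> Lrec s a b (Suc (Suc m))) F"
      by simp
    then have "(Yb (Suc (Suc m)) \<longlongrightarrow> Lrec s a b (Suc (Suc m))) F"
      by (rule iffD2[OF tendsto_cong, rotated]) (rule eventually_mono[OF ev Yb_rec])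
    then show ?case using Suc.IH by simp
  qed
  then show ?thesis by simp
qed



lemma filt_mulpow:
  assumes s: "((\<lambda>t. t) \<longlongrightarrow> s) F" "s^2 = 1" and ev: "eventually (\<lambda>t. t \<in> {-1<..<1::real}) F"
    and a: "a > -1"
  shows "((\<lambda>t. (1 - t^2) * (1 - t^2) powr a) \<longlongrightarrow> 0) F"
proof -
  have "((\<lambda>t. (1 - t^2) powr (1 + a)) \<longlongrightarrow> 0) F"
    using filt_facts(3)[OF s ev] a by simp
  then show ?thesis
  proof (rule iffD2[OF tendsto_cong, rotated])
    show "\<forall>\<^sub>F x in F. (1 - x^2) * (1 - x^2) powr a = (1 - x^2) powr (1 + a)"
      using ev
    proof eventually_elim
      case (elim x)
      then have "1 - x^2 > 0" using sq_pos by blast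
      then show ?case by (simp add: powr_add)
    qed
  qed
qed

lemma Yb01:
  assumes t: "t \<in> {-1<..<1}"
  shows "Yb 0 t = pi - arccos t" "Yb 1 t = sqrt (1 - t^2) - t * (pi - arccos t)"
proof -
  have q: "1 - t^2 > 0" using sq_pos[OF t] .
  have h: "(1 - t^2) powr (-1/2) * sqrt (1 - t^2) = 1"
    using q by (simp add: powr_half_sqrt[symmetric] powr_add[symmetric])
  show "Yb 0 t = pi - arccos t"
    unfolding Yb_def yb_def using h by (simp add: algebra_simps)
  have d: "deriv yb t = 1 - t*(pi - arccos t)/sqrt(1-t^2)" using yb_deriv0[OF t] DERIV_imp_deriv by blast
  show "Yb 1 t = sqrt (1 - t^2) - t * (pi - arccos t)"
    unfolding Yb_def using q by (simp add: d powr_half_sqrt field_simps)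
qed

lemma Yb01_lim:
  assumes s: "((\<lambda>t. t) \<longlongrightarrow> s) F" "s^2 = 1" and ev: "eventually (\<lambda>t. t \<in> {-1<..<1::real}) F"
  shows "(Yb 0 \<longlongrightarrow> pi - arccos s) F" "(Yb 1 \<longlongrightarrow> - s * (pi - arccos s)) F"
proof -
  have s1: "s \<in> {-1..1}" using s(2) by (auto simp: power2_eq_1_iff)
  have ac: "((\<lambda>t. arccos t) \<longlongrightarrow> arccos s) F"
    by (rule continuous_on_tendsto_compose[OF continuous_on_arccos' s(1) s1])
       (use ev in \<open>auto elim: eventually_mono\<close>)
  have "((\<lambda>t. pi - arccos t) \<longlongrightarrow> pi - arccos s) F" by (intro tendsto_intros ac)
  then show "(Yb 0 \<longlongrightarrow> pi - arccos s) F"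
    by (rule iffD2[OF tendsto_cong, rotated]) (rule eventually_mono[OF ev Yb01(1)])
  have "((\<lambda>t. sqrt (1 - t^2) - t * (pi - arccos t)) \<longlongrightarrow> sqrt (1 - s^2) - s * (pi - arccos s)) F"
    by (intro tendsto_intros ac s)
  then have "((\<lambda>t. sqrt (1 - t^2) - t * (pi - arccos t)) \<longlongrightarrow> - s * (pi - arccos s)) F"
    using s(2) by simp
  then show "(Yb 1 \<longlongrightarrow> - s * (pi - arccos s)) F"
    by (rule iffD2[OF tendsto_cong, rotated]) (rule eventually_mono[OF ev Yb01(2)])
qed

definition T :: "nat \<Rightarrow> nat \<Rightarrow> real" where
  "T j m = - (real j - 1) * 2 powr (real m - 2) * Gamma ((real j - 3) / 2 + real m) / pi powr ((real j - 1) / 2)"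

lemma Lrec_neg: "Lrec s 0 0 m = 0"
  by (induction s "0::real" "0::real" m rule: Lrec.induct) auto

lemma T2_1: "T 2 (Suc 0) = -1/2"
proof -
  have "T 2 (Suc 0) = - (2 powr (-1)) * Gamma (1/2) / pi powr (1/2)"
    unfolding T_def by simp
  also have "\<dots> = -1/2" by (simp add: Gamma_one_half_real powr_half_sqrt powr_minus)
  finally show ?thesis .
qed

lemma T2_rec: "T 2 (Suc (Suc k)) = (2 * real k + 1) * T 2 (Suc k)"
proof -
  have g: "Gamma (real k + 3/2) = (real k + 1/2) * Gamma (real k + 1/2)"
  proof -
    have "Gamma ((real k + 1/2) + 1) = (real k + 1/2) * Gamma (real k + 1/2)"
      by (rule Gamma_plus1) (auto dest: nonpos_Ints_nonpos)
    then show ?thesis by (simp add: add.assoc)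
  qed
  have p: "2 powr (real k) = 2 * 2 powr (real k - 1)"
  proof -
    have "2 powr (real k) = 2 powr (1 + (real k - 1))" by simp
    then show ?thesis by (simp only: powr_add) simp
  qed
  have "T 2 (Suc (Suc k)) = - (2 powr (real k) * Gamma (real k + 3/2) / pi powr (1/2))"
    unfolding T_def by (simp add: algebra_simps)
  moreover have "T 2 (Suc k) = - (2 powr (real k - 1) * Gamma (real k + 1/2) / pi powr (1/2))"
    unfolding T_def by (simp add: algebra_simps)
  ultimately show ?thesis unfolding g p
  proof -
    define G where "G = Gamma (real k + 1/2)"
    define P where "P = 2 powr (real k - 1)"
    define r where "r = pi powr (1/2)"
    assume "T 2 (Suc (Suc k)) = - (2 * 2 powr (real k - 1) * ((real k + 1 / 2) * Gamma (real k + 1 / 2)) / pi powr (1 / 2))"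
      "T 2 (Suc k) = - (2 powr (real k - 1) * Gamma (real k + 1 / 2) / pi powr (1 / 2))"
    then have e1: "T 2 (Suc (Suc k)) = - (2 * P * ((real k + 1 / 2) * G) / r)"
       and e2: "T 2 (Suc k) = - (P * G / r)"
      unfolding G_def P_def r_def by simp_all
    have a: "2 * P * ((real k + 1 / 2) * G) = (2 * real k + 1) * (P * G)"
      by (simp add: algebra_simps)
    show ?thesis by (simp only: e1 e2 a mult_minus_right times_divide_eq_right)
  qed
qed

lemma Lrec_pos: "Lrec 1 pi (-pi) (Suc k) = 2 * pi * T 2 (Suc k)"
proof (induction k)
  case 0 then show ?case by (simp add: T2_1)
next
  case (Suc k) then show ?case by (simp add: T2_rec)
qed



fun F3 :: "nat \<Rightarrow> real \<Rightarrow> real" where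
  "F3 0 t = 1 / (2 * pi) * (1 + t * ln (1 - t) + (4 / 3 - ln 2) * t)"
| "F3 (Suc 0) t = 1 / (2 * pi) * (ln (1 - t) - t / (1 - t) + (4 / 3 - ln 2))"
| "F3 (Suc (Suc k)) t = - (1 / (2 * pi)) * (fact k / (1 - t)^(k+1) + fact (k+1) / (1 - t)^(k+2))"

lemma aux_pow: "(u::real) > 0 \<Longrightarrow> (0 * u^Suc p - c*(real(Suc p)*((0-1)*u^(Suc p - Suc 0)))) / (u^Suc p * u^Suc p) = c * real (Suc p) / u^Suc(Suc p)"
proof -
  assume u: "u > 0"
  have "u^Suc p * u^Suc p = u^p * u^Suc (Suc p)" by (simp add: power_Suc)
  then show ?thesis using u by (simp add: field_simps)
qed
lemma inv_pow_deriv: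
  assumes t: "t < (1::real)"
  shows "((\<lambda>t. c / (1-t)^(Suc p)) has_real_derivative c * real (Suc p) / (1-t)^(Suc (Suc p))) (at t)"
proof -
  have u: "1 - t > 0" using t by simp
  show ?thesis
    apply (rule derivative_eq_intros refl)+
    using u apply simp
    using aux_pow[OF u] by simp
qed
lemma berg3_eq: "berg 3 t = F3 0 t"
  by (simp add: numeral_3_eq_3)

lemma F3_deriv:
  assumes t: "t \<in> {-1<..<1}"
  shows "(F3 m has_real_derivative F3 (Suc m) t) (at t)"
proof -
  have t1: "1 - t > 0" using t by simp
  consider "m = 0" | "m = 1" | k where "m = Suc (Suc k)" by (metis One_nat_def not0_implies_Suc)
  then show ?thesis
  proof cases
    case 1
    have "((\<lambda>t. 1 / (2 * pi) * (1 + t * ln (1 - t) + (4 / 3 - ln 2) * t)) has_real_derivative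
        1 / (2 * pi) * (ln (1 - t) - t / (1 - t) + (4 / 3 - ln 2))) (at t)"
      using t1 by (auto intro!: derivative_eq_intros simp: field_simps)
    then show ?thesis using 1 by (simp add: fun_eq_iff[symmetric] F3.simps(1)[abs_def])
  next
    case 2
    have "((\<lambda>t. 1 / (2 * pi) * (ln (1 - t) - t / (1 - t) + (4 / 3 - ln 2))) has_real_derivative
        - (1 / (2 * pi)) * (fact 0 / (1 - t)^(0+1) + fact (0+1) / (1 - t)^(0+2))) (at t)"
      using t1 by (auto intro!: derivative_eq_intros simp: field_simps power2_eq_square)
    then show ?thesis using 2 by (simp add: F3.simps(2)[abs_def] power2_eq_square)
  next
    case 3
    have d1: "((\<lambda>t. fact k / (1 - t)^(Suc k)) has_real_derivative fact k * real (Suc k) / (1-t)^(Suc (Suc k))) (at t)"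
      using inv_pow_deriv[of t "fact k" k] t by simp
    have d2: "((\<lambda>t. fact (Suc k) / (1 - t)^(Suc (Suc k))) has_real_derivative fact (Suc k) * real (Suc (Suc k)) / (1-t)^(Suc (Suc (Suc k)))) (at t)"
      using inv_pow_deriv[of t "fact (Suc k)" "Suc k"] t by simp
    have "((\<lambda>t. - (1 / (2 * pi)) * (fact k / (1 - t)^(Suc k) + fact (Suc k) / (1 - t)^(Suc (Suc k)))) has_real_derivative
         - (1 / (2 * pi)) * (fact k * real (Suc k) / (1-t)^(Suc (Suc k)) + fact (Suc k) * real (Suc (Suc k)) / (1-t)^(Suc (Suc (Suc k))))) (at t)"
      by (intro DERIV_cmult DERIV_add d1 d2)
    moreover have "fact k * real (Suc k) = fact (Suc k)" "fact (Suc k) * real (Suc (Suc k)) = fact (Suc (Suc k))"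
      by (simp_all add: algebra_simps)
    ultimately show ?thesis using 3 by (simp add: F3.simps(3)[abs_def] ac_simps)
  qed
qed



definition Z :: "nat \<Rightarrow> nat \<Rightarrow> real \<Rightarrow> real" where
  "Z j m t = (1 - t\<^sup>2) powr ((real j - 3) / 2 + real m) * (deriv ^^ m) (berg j) t"

lemma berg3_smooth: "smoothI (berg 3)" and berg3_D: "t \<in> {-1<..<1} \<Longrightarrow> (deriv^^m) (berg 3) t = F3 m t"
  using derivs_smooth[of F3 "berg 3", OF F3_deriv] berg3_eq by auto

lemma Z3: "t \<in> {-1<..<1} \<Longrightarrow> Z 3 m t = (1 - t^2)^m * F3 m t"
  unfolding Z_def using sq_pos[of t] by (simp add: berg3_D powr_realpow)

lemma aux_ab:
  assumes b: "(b::real) > 0"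
  shows "(a*b)^(Suc (Suc k)) * (c * (x / b^(k+1) + y / b^(k+2))) = c * (x * a^(k+2) * b + y * a^(k+2))"
proof -
  have e1: "b^(k+2) = b^(k+1) * b" by simp
  have "(a*b)^(Suc (Suc k)) * (c * (x / b^(k+1) + y / b^(k+2)))
     = c * a^(k+2) * (x * (b^(k+2) / b^(k+1)) + y * (b^(k+2) / b^(k+2)))"
    by (simp only: power_mult_distrib Suc_eq_plus1 add.assoc one_add_one) (simp add: field_simps)
  also have "\<dots> = c * a^(k+2) * (x * b + y)" using b unfolding e1 by simp
  finally show ?thesis by (simp add: algebra_simps)
qed

lemma Z3_k:
  assumes t: "t \<in> {-1<..<1}"
  shows "Z 3 (Suc (Suc k)) t = - (1 / (2 * pi)) * (fact k * (1+t)^(k+2) * (1-t) + fact (k+1) * (1+t)^(k+2))"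
proof -
  have u: "1 - t > 0" using t by simp
  have "1 - t^2 = (1+t)*(1-t)" by (simp add: power2_eq_square algebra_simps)
  then show ?thesis unfolding Z3[OF t] F3.simps
    using aux_ab[OF u, of "1+t" k "- (1 / (2 * pi))" "fact k" "fact (k+1)"] by simp
qed

lemma Z3_1_left: "(Z 3 1 \<longlongrightarrow> -1/pi) (at_left 1)"
proof -
  have "((\<lambda>t. (1 - t^2) * (1 / (2 * pi) * (ln (1 - t) - t / (1 - t) + (4 / 3 - ln 2)))) \<longlongrightarrow> -1/pi) (at_left 1)"
    by real_asymp
  then show ?thesis
    by (rule iffD2[OF tendsto_cong, rotated])
       (rule eventually_mono[OF eventually_at_left_real[of "-1" 1]], simp_all add: Z3)
qed

lemma Z3_1_right: "(Z 3 1 \<longlongrightarrow> 0) (at_right (-1))"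
proof -
  have "((\<lambda>t. (1 - t^2) * (1 / (2 * pi) * (ln (1 - t) - t / (1 - t) + (4 / 3 - ln 2)))) \<longlongrightarrow> 0) (at_right (-1))"
    by real_asymp
  then show ?thesis
    by (rule iffD2[OF tendsto_cong, rotated])
       (rule eventually_mono[OF eventually_at_right_real[of "-1" 1]], simp_all add: Z3)
qed

lemma Z3_0_left: "((\<lambda>t. (1 - t^2) * Z 3 0 t) \<longlongrightarrow> 0) (at_left 1)"
proof -
  have "((\<lambda>t. (1 - t^2) * (1 / (2 * pi) * (1 + t * ln (1 - t) + (4 / 3 - ln 2) * t))) \<longlongrightarrow> 0) (at_left 1)"
    by real_asymp
  then show ?thesis
    by (rule iffD2[OF tendsto_cong, rotated])
       (rule eventually_mono[OF eventually_at_left_real[of "-1" 1]], simp_all add: Z3)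
qed

lemma Z3_0_right: "((\<lambda>t. (1 - t^2) * Z 3 0 t) \<longlongrightarrow> 0) (at_right (-1))"
proof -
  have "((\<lambda>t. (1 - t^2) * (1 / (2 * pi) * (1 + t * ln (1 - t) + (4 / 3 - ln 2) * t))) \<longlongrightarrow> 0) (at_right (-1))"
    by real_asymp
  then show ?thesis
    by (rule iffD2[OF tendsto_cong, rotated])
       (rule eventually_mono[OF eventually_at_right_real[of "-1" 1]], simp_all add: Z3)
qed



lemma berg_rec:
  assumes "j \<ge> 2"
  shows "berg (j+2) = (\<lambda>t. (real j + 1) / (2 * pi) * berg j t
        + (real j + 1) / (2 * pi * (real j - 1)) * t * deriv (berg j) t
        + (real j + 1) / (2 * pi * omega j) * t)"
proof -
  obtain k where k: "j = k + 2" using assms by (metis add.commute le_Suc_ex)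
  show ?thesis unfolding k by (simp add: numeral_2_eq_2)
qed

lemma T_rec:
  assumes j: "j \<ge> 2"
  shows "(real j + 1) / (2 * pi * (real j - 1)) * T j (Suc m) = T (j+2) m"
proof -
  define P where "P = 2 powr (real m - 2)"
  define G where "G = Gamma ((real j - 3) / 2 + real (Suc m))"
  define Q where "Q = pi powr ((real j - 1) / 2)"
  have j1: "real j - 1 > 0" using j by simp
  have Qp: "Q > 0" unfolding Q_def by simp
  have p: "2 powr (real (Suc m) - 2) = 2 * P"
  proof -
    have "2 powr (real (Suc m) - 2) = 2 powr (1 + (real m - 2))" by (simp add: algebra_simps)
    then show ?thesis unfolding P_def by (simp only: powr_add) simp
  qed
  have q: "pi powr ((real (j+2) - 1) / 2) = pi * Q"
  proof -
    have "pi powr ((real (j+2) - 1) / 2) = pi powr (1 + (real j - 1) / 2)" by (simp add: field_simps)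
    then show ?thesis unfolding Q_def by (simp only: powr_add) simp
  qed
  have g: "Gamma ((real (j+2) - 3) / 2 + real m) = G"
    unfolding G_def by (simp add: field_simps)
  have e1: "T j (Suc m) = - (real j - 1) * (2 * P) * G / Q" unfolding T_def p G_def Q_def by simp
  have e2: "T (j+2) m = - (real j + 1) * P * G / (pi * Q)" unfolding T_def g q P_def by simp
  show ?thesis unfolding e1 e2 using j1 Qp by (simp add: field_simps)
qed

lemma T3_1: "T 3 (Suc 0) = -1/pi"
  unfolding T_def by simp

lemma T3_k: "T 3 (Suc (Suc k)) = - (1 / (2 * pi)) * (fact (k+1) * 2^(k+2))"
proof -
  have g: "Gamma ((real 3 - 3) / 2 + real (Suc (Suc k))) = fact (k+1)"
    using Gamma_fact[of "k+1", where 'a=real] by (simp add: algebra_simps)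
  have p: "2 powr (real (Suc (Suc k)) - 2) = 2^k" by (simp add: powr_realpow)
  have "T 3 (Suc (Suc k)) = - 2 * 2^k * fact (k+1) / pi"
    unfolding T_def g p by simp
  then show ?thesis by (simp add: field_simps)
qed



definition Good :: "nat \<Rightarrow> bool" where
  "Good j \<longleftrightarrow> smoothI (berg j) \<and>
     (\<forall>m. ((\<lambda>t. (1 - t^2) * Z j m t) \<longlongrightarrow> 0) (at_right (-1)) \<and>
          ((\<lambda>t. (1 - t^2) * Z j m t) \<longlongrightarrow> 0) (at_left 1)) \<and>
     (\<forall>m. (j, m) \<notin> {(2, 0), (3, 0)} \<longrightarrow>
          (Z j m \<longlongrightarrow> 0) (at_right (-1)) \<and> (Z j m \<longlongrightarrow> T j m) (at_left 1))"

lemma filtR: "((\<lambda>t. t) \<longlongrightarrow> -1) (at_right (-1::real))" "(-1::real)^2 = 1"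
    "eventually (\<lambda>t. t \<in> {-1<..<1::real}) (at_right (-1))"
  using eventually_at_right_real[of "-1::real" 1] by (auto intro: tendsto_ident_at)

lemma filtL: "((\<lambda>t. t) \<longlongrightarrow> 1) (at_left (1::real))" "(1::real)^2 = 1"
    "eventually (\<lambda>t. t \<in> {-1<..<1::real}) (at_left 1)"
  using eventually_at_left_real[where a=1 and b="-1::real"] by (auto intro: tendsto_ident_at)

lemma mul_sq_lim:
  assumes s: "((\<lambda>t. t) \<longlongrightarrow> s) F" "s^2 = 1" and ev: "eventually (\<lambda>t. t \<in> {-1<..<1::real}) F"
    and l: "(f \<longlongrightarrow> L) F"
  shows "((\<lambda>t. (1 - t^2) * f t) \<longlongrightarrow> 0) F"
  using tendsto_mult[OF filt_facts(1)[OF s ev] l] by simp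

lemma Z3_lims:
  assumes m: "m \<noteq> 0"
  shows "(Z 3 m \<longlongrightarrow> 0) (at_right (-1)) \<and> (Z 3 m \<longlongrightarrow> T 3 m) (at_left 1)"
proof -
  consider "m = 1" | k where "m = Suc (Suc k)" using m by (metis One_nat_def not0_implies_Suc)
  then show ?thesis
  proof cases
    case 1 then show ?thesis using Z3_1_left Z3_1_right T3_1 by simp
  next
    case 2
    let ?f = "\<lambda>t. - (1 / (2 * pi)) * (fact k * (1+t)^(k+2) * (1-t) + fact (k+1) * (1+t)^(k+2))"
    have "(?f \<longlongrightarrow> ?f (-1)) (at_right (-1))" by (intro tendsto_intros filtR)
    then have r: "(?f \<longlongrightarrow> 0) (at_right (-1))" by simp
    have "(?f \<longlongrightarrow> ?f 1) (at_left 1)" by (intro tendsto_intros filtL)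
    then have l: "(?f \<longlongrightarrow> T 3 m) (at_left 1)" unfolding 2 T3_k by simp
    show ?thesis
    proof
      show "(Z 3 m \<longlongrightarrow> 0) (at_right (-1))"
        using r by (rule iffD2[OF tendsto_cong, rotated]) (rule eventually_mono[OF filtR(3)], simp add: 2 Z3_k)
      show "(Z 3 m \<longlongrightarrow> T 3 m) (at_left 1)"
        using l by (rule iffD2[OF tendsto_cong, rotated]) (rule eventually_mono[OF filtL(3)], simp add: 2 Z3_k)
    qed
  qed
qed

lemma Good3: "Good 3"
  unfolding Good_def
proof (intro conjI allI impI)
  show "smoothI (berg 3)" by (rule berg3_smooth)
  fix m :: nat
  show "((\<lambda>t. (1 - t^2) * Z 3 m t) \<longlongrightarrow> 0) (at_right (-1))"
    using Z3_0_right mul_sq_lim[OF filtR, of "Z 3 m"] Z3_lims[of m] by (cases "m = 0") auto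
  show "((\<lambda>t. (1 - t^2) * Z 3 m t) \<longlongrightarrow> 0) (at_left 1)"
    using Z3_0_left mul_sq_lim[OF filtL, of "Z 3 m"] Z3_lims[of m] by (cases "m = 0") auto
next
  fix m :: nat assume "(3::nat, m) \<notin> {(2, 0), (3, 0)}"
  then have "m \<noteq> 0" by auto
  then show "(Z 3 m \<longlongrightarrow> 0) (at_right (-1))" "(Z 3 m \<longlongrightarrow> T 3 m) (at_left 1)"
    using Z3_lims by auto
qed



lemma berg2_eq: "berg 2 = (\<lambda>t. (1/(2*pi)) * yb t + 0 * t * deriv yb t + (-1/(4*pi)) * t)"
  by (simp add: numeral_2_eq_2 yb_def fun_eq_iff)

lemma yb_smooth: "smoothI yb"
  unfolding smoothI_def using Qy_all unfolding Qy_def by blast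

lemma Z2:
  assumes t: "t \<in> {-1<..<1}"
  shows "Z 2 m t = Yb m t / (2*pi) + (-1/(4*pi)) * ((1-t^2) powr (real m - 1/2) * lin m t)"
proof -
  have d: "(deriv^^m) (berg 2) t = (1/(2*pi)) * (deriv^^m) yb t + (-1/(4*pi)) * lin m t"
    unfolding berg2_eq using smooth_comb(2)[OF yb_smooth t, where a="1/(2*pi)" and b=0 and c="-1/(4*pi)" and m=m] by simp
  have e: "(real 2 - 3) / 2 + real m = real m - 1/2" by simp
  show ?thesis unfolding Z_def e d Yb_def by (simp add: algebra_simps)
qed

lemma Z2_gen:
  assumes s: "((\<lambda>t. t) \<longlongrightarrow> s) F" "s^2 = 1" and ev: "eventually (\<lambda>t. t \<in> {-1<..<1::real}) F"
  shows "m \<noteq> 0 \<Longrightarrow> (Z 2 m \<longlongrightarrow> Lrec s (pi - arccos s) (- s * (pi - arccos s)) m / (2*pi)) F"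
    "((\<lambda>t. (1 - t^2) * Z 2 m t) \<longlongrightarrow> 0) F"
proof -
  have Y: "(Yb m \<longlongrightarrow> Lrec s (pi - arccos s) (- s * (pi - arccos s)) m) F"
    by (rule Yb_lim[OF s ev Yb01_lim(1)[OF s ev] Yb01_lim(2)[OF s ev]])
  assume m: "m \<noteq> 0"
  have "((\<lambda>t. Yb m t / (2*pi) + (-1/(4*pi)) * ((1-t^2) powr (real m - 1/2) * lin m t)) \<longlongrightarrow>
      Lrec s (pi - arccos s) (- s * (pi - arccos s)) m / (2*pi) + (-1/(4*pi)) * (0 * lin m s)) F"
    using m unfolding lin_def
    by (intro tendsto_intros Y filt_facts(3)[OF s ev] s) auto
  moreover have "eventually (\<lambda>t. Yb m t / (2*pi) + (-1/(4*pi)) * ((1-t^2) powr (real m - 1/2) * lin m t) = Z 2 m t) F"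
    using ev by eventually_elim (simp add: Z2)
  ultimately have "(Z 2 m \<longlongrightarrow> Lrec s (pi - arccos s) (- s * (pi - arccos s)) m / (2*pi) + (-1/(4*pi)) * (0 * lin m s)) F"
    by (rule Lim_transform_eventually)
  then show "(Z 2 m \<longlongrightarrow> Lrec s (pi - arccos s) (- s * (pi - arccos s)) m / (2*pi)) F"
    by simp
next
  have Y: "(Yb m \<longlongrightarrow> Lrec s (pi - arccos s) (- s * (pi - arccos s)) m) F"
    by (rule Yb_lim[OF s ev Yb01_lim(1)[OF s ev] Yb01_lim(2)[OF s ev]])
  have "((\<lambda>t. (1 - t^2) * Yb m t / (2*pi) + (-1/(4*pi)) * (((1-t^2) * (1-t^2) powr (real m - 1/2)) * lin m t)) \<longlongrightarrow>
      0 * Lrec s (pi - arccos s) (- s * (pi - arccos s)) m / (2*pi) + (-1/(4*pi)) * (0 * lin m s)) F"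
    unfolding lin_def
    by (intro tendsto_intros Y filt_facts(1)[OF s ev] filt_mulpow[OF s ev] s) (auto intro: s)
  moreover have "eventually (\<lambda>t. (1 - t^2) * Yb m t / (2*pi) + (-1/(4*pi)) * (((1-t^2) * (1-t^2) powr (real m - 1/2)) * lin m t) = (1 - t^2) * Z 2 m t) F"
    using ev by eventually_elim (simp add: Z2 field_simps)
  ultimately have "((\<lambda>t. (1 - t^2) * Z 2 m t) \<longlongrightarrow> 0 * Lrec s (pi - arccos s) (- s * (pi - arccos s)) m / (2*pi) + (-1/(4*pi)) * (0 * lin m s)) F"
    by (rule Lim_transform_eventually)
  then show "((\<lambda>t. (1 - t^2) * Z 2 m t) \<longlongrightarrow> 0) F"
    by simp
qed

lemma Good2: "Good 2"
  unfolding Good_def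
proof (intro conjI allI impI)
  show "smoothI (berg 2)" unfolding berg2_eq by (rule smooth_comb(1)[OF yb_smooth])
  fix m :: nat
  show "((\<lambda>t. (1 - t^2) * Z 2 m t) \<longlongrightarrow> 0) (at_right (-1))" by (rule Z2_gen(2)[OF filtR])
  show "((\<lambda>t. (1 - t^2) * Z 2 m t) \<longlongrightarrow> 0) (at_left 1)" by (rule Z2_gen(2)[OF filtL])
next
  fix m :: nat assume "(2::nat, m) \<notin> {(2, 0), (3, 0)}"
  then obtain k where k: "m = Suc k" by (cases m) auto
  show "(Z 2 m \<longlongrightarrow> 0) (at_right (-1))"
    using Z2_gen(1)[OF filtR, of m] k by (simp add: Lrec_neg)
  show "(Z 2 m \<longlongrightarrow> T 2 m) (at_left 1)"
    using Z2_gen(1)[OF filtL, of m] k by (simp add: Lrec_pos)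
qed



lemma Z_step:
  assumes j: "j \<ge> 2" and sm: "smoothI (berg j)" and t: "t \<in> {-1<..<1}"
  shows "Z (j+2) m t = ((real j + 1) / (2 * pi) + (real j + 1) / (2 * pi * (real j - 1)) * real m) * (1 - t^2) * Z j m t
     + (real j + 1) / (2 * pi * (real j - 1)) * t * Z j (Suc m) t
     + (real j + 1) / (2 * pi * omega j) * ((1 - t^2) powr ((real j - 3) / 2 + real m + 1) * lin m t)"
proof -
  define q where "q = 1 - t^2"
  define e where "e = (real j - 3) / 2 + real m"
  have q: "q > 0" using sq_pos[OF t] by (simp add: q_def)
  have d: "(deriv^^m) (berg (j+2)) t = ((real j + 1) / (2 * pi) + (real j + 1) / (2 * pi * (real j - 1)) * real m) * (deriv^^m) (berg j) t
     + (real j + 1) / (2 * pi * (real j - 1)) * t * (deriv^^Suc m) (berg j) t + (real j + 1) / (2 * pi * omega j) * lin m t"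
    unfolding berg_rec[OF j] by (rule smooth_comb(2)[OF sm t])
  have e1: "(real (j+2) - 3) / 2 + real m = e + 1" unfolding e_def by (simp add: field_simps)
  have e2: "(real j - 3) / 2 + real (Suc m) = e + 1" unfolding e_def by (simp add: field_simps)
  have p: "q powr (e + 1) = q * q powr e" using q by (simp add: powr_add)
  have "Z (j+2) m t = q powr (e+1) * (deriv^^m) (berg (j+2)) t" unfolding Z_def e1 q_def ..
  moreover have "Z j m t = q powr e * (deriv^^m) (berg j) t" unfolding Z_def e_def q_def ..
  moreover have "Z j (Suc m) t = q powr (e+1) * (deriv^^Suc m) (berg j) t" unfolding Z_def e2 q_def ..
  ultimately show ?thesis unfolding d q_def[symmetric] e_def[symmetric] p by (simp add: algebra_simps)
qed

lemma Z_step_lim: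
  assumes j: "j \<ge> 2" and sm: "smoothI (berg j)"
    and s: "((\<lambda>t. t) \<longlongrightarrow> s) F" "s^2 = 1" and ev: "eventually (\<lambda>t. t \<in> {-1<..<1::real}) F"
    and l0: "((\<lambda>t. (1 - t^2) * Z j m t) \<longlongrightarrow> 0) F" and l1: "(Z j (Suc m) \<longlongrightarrow> L) F"
  shows "(Z (j+2) m \<longlongrightarrow> (real j + 1) / (2 * pi * (real j - 1)) * s * L) F"
proof -
  have pos: "(real j - 3) / 2 + real m + 1 > 0"
  proof -
    have "real j \<ge> 2" using j by simp
    moreover have "real m \<ge> 0" by simp
    ultimately show ?thesis by (simp add: field_simps)
  qed
  have "((\<lambda>t. ((real j + 1) / (2 * pi) + (real j + 1) / (2 * pi * (real j - 1)) * real m) * ((1 - t^2) * Z j m t)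
     + (real j + 1) / (2 * pi * (real j - 1)) * t * Z j (Suc m) t
     + (real j + 1) / (2 * pi * omega j) * ((1 - t^2) powr ((real j - 3) / 2 + real m + 1) * lin m t)) \<longlongrightarrow>
     ((real j + 1) / (2 * pi) + (real j + 1) / (2 * pi * (real j - 1)) * real m) * 0
     + (real j + 1) / (2 * pi * (real j - 1)) * s * L
     + (real j + 1) / (2 * pi * omega j) * (0 * lin m s)) F"
    unfolding lin_def
    by (intro tendsto_intros l0 l1 s filt_facts(3)[OF s ev pos]) (auto intro: s)
  moreover have "eventually (\<lambda>t. ((real j + 1) / (2 * pi) + (real j + 1) / (2 * pi * (real j - 1)) * real m) * ((1 - t^2) * Z j m t)
     + (real j + 1) / (2 * pi * (real j - 1)) * t * Z j (Suc m) t
     + (real j + 1) / (2 * pi * omega j) * ((1 - t^2) powr ((real j - 3) / 2 + real m + 1) * lin m t) = Z (j+2) m t) F"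
    using ev
  proof eventually_elim
    case (elim t)
    show ?case unfolding Z_step[OF j sm elim] by (simp only: mult.assoc)
  qed
  ultimately have "(Z (j+2) m \<longlongrightarrow> ((real j + 1) / (2 * pi) + (real j + 1) / (2 * pi * (real j - 1)) * real m) * 0
     + (real j + 1) / (2 * pi * (real j - 1)) * s * L
     + (real j + 1) / (2 * pi * omega j) * (0 * lin m s)) F"
    by (rule Lim_transform_eventually)
  then show ?thesis by simp
qed

lemma Good_step:
  assumes j: "j \<ge> 2" and G: "Good j"
  shows "Good (j+2)"
proof -
  have sm: "smoothI (berg j)" using G unfolding Good_def by blast
  have l0: "((\<lambda>t. (1 - t^2) * Z j m t) \<longlongrightarrow> 0) (at_right (-1))"
    "((\<lambda>t. (1 - t^2) * Z j m t) \<longlongrightarrow> 0) (at_left 1)" for m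
    using G unfolding Good_def by blast+
  have l1: "(Z j (Suc m) \<longlongrightarrow> 0) (at_right (-1))" "(Z j (Suc m) \<longlongrightarrow> T j (Suc m)) (at_left 1)" for m
    using G unfolding Good_def by auto
  have R: "(Z (j+2) m \<longlongrightarrow> 0) (at_right (-1))" for m
    using Z_step_lim[OF j sm filtR l0(1) l1(1)] by simp
  have L: "(Z (j+2) m \<longlongrightarrow> T (j+2) m) (at_left 1)" for m
    using Z_step_lim[OF j sm filtL l0(2) l1(2)] T_rec[OF j] by simp
  show ?thesis unfolding Good_def
  proof (intro conjI allI impI)
    show "smoothI (berg (j+2))" unfolding berg_rec[OF j] by (rule smooth_comb(1)[OF sm])
    fix m :: nat
    show "((\<lambda>t. (1 - t^2) * Z (j+2) m t) \<longlongrightarrow> 0) (at_right (-1))" by (rule mul_sq_lim[OF filtR R])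
    show "((\<lambda>t. (1 - t^2) * Z (j+2) m t) \<longlongrightarrow> 0) (at_left 1)" by (rule mul_sq_lim[OF filtL L])
    show "(Z (j+2) m \<longlongrightarrow> 0) (at_right (-1))" by (rule R)
    show "(Z (j+2) m \<longlongrightarrow> T (j+2) m) (at_left 1)" by (rule L)
  qed
qed

lemma Good_all: "j \<ge> 2 \<Longrightarrow> Good j"
proof (induction j rule: less_induct)
  case (less j)
  consider "j = 2" | "j = 3" | "j \<ge> 4" using less.prems by linarith
  then show ?case
  proof cases
    case 1 then show ?thesis using Good2 by simp
  next
    case 2 then show ?thesis using Good3 by simp
  next
    case 3
    then have G: "Good (j - 2)" by (intro less.IH) auto
    have e: "j - 2 + 2 = j" using 3 by simp
    have "Good (j - 2 + 2)" by (rule Good_step) (use 3 G in auto)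
    then show ?thesis by (simp only: e)
  qed
qed

theorem lemma4p3:
  fixes j m :: nat
  assumes "j \<ge> 2" and "(j, m) \<notin> {(2, 0), (3, 0)}"
  shows "((\<lambda>t. (1 - t\<^sup>2) powr ((real j - 3) / 2 + real m) * (deriv ^^ m) (berg j) t)
            \<longlongrightarrow> 0) (at_right (-1)) \<and>
         ((\<lambda>t. (1 - t\<^sup>2) powr ((real j - 3) / 2 + real m) * (deriv ^^ m) (berg j) t)
            \<longlongrightarrow> - (real j - 1) * 2 powr (real m - 2)
                 * Gamma ((real j - 3) / 2 + real m) / pi powr ((real j - 1) / 2)) (at_left 1)"
  using Good_all[OF assms(1)] assms(2) unfolding Good_def Z_def[abs_def] T_def by blast

end
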